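(* Let $\gamma$ be a functorial with $\gamma(G)>1$ for every finite group $G\ne1$, satisfying (F1) and (F2). (1) If $G=A_1\times\dots\times A_n$ is the direct product of its normal subgroups $A_i$, then $h_\gamma(G)=\max\{h_\gamma(A_i)\mid 1\le i\le n\}$. (2) If $G=\langle A_i\mid 1\le i\le n\rangle$ is the join of its subnormal subgroups $A_i$, then $h_\gamma(G)\le\max\{h_\gamma(A_i)\mid 1\le i\le n\}$; if moreover $\gamma$ satisfies (F5), then $h_\gamma(G)=\max\{h_\gamma(A_i)\mid 1\le i\le n\}$.
   Context: All groups are finite. A functorial is a function $\theta$ assigning to each group $G$ a characteristic subgroup $\theta(G)$ such that $f(\theta(G))=\theta(f(G))$ for every isomorphism $f$. Conditions (for every group $G$): (F1) $f(\gamma(G))\subseteq\gamma(f(G))$ for every epimorphism $f:G\to G^*$; (F2) $\gamma(N)\subseteq\gamma(G)$ for every $N\trianglelefteq G$; (F5) $\gamma(G)\cap N\subseteq\gamma(N)$ for every $N\trianglelefteq G$. The $\gamma$-series is $\gamma_{(0)}(G)=1$ and $\gamma_{(i+1)}(G)$ the full preimage of $\gamma(G/\gamma_{(i)}(G))$; $h_\gamma(G)$ is the least $h$ with $\gamma_{(h)}(G)=G$. *)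

theory Defs
  imports "HOL-Algebra.Algebra"
begin

text \<open>A functorial is represented by its values on finite groups whose carrier is a
  set of natural numbers (every finite group is isomorphic to such a group); it is
  extended to finite groups of arbitrary type by transport of structure.\<close>

definition functorial :: "(nat monoid \<Rightarrow> nat set) \<Rightarrow> bool" where
  "functorial \<gamma> \<longleftrightarrow>
     (\<forall>G::nat monoid. group G \<and> finite (carrier G) \<longrightarrow>
        subgroup (\<gamma> G) G \<and> (\<forall>f \<in> iso G G. f ` \<gamma> G = \<gamma> G)) \<and>
     (\<forall>(G::nat monoid) (H::nat monoid) f. group G \<and> finite (carrier G) \<and> group H \<and> f \<in> iso G H
        \<longrightarrow> f ` \<gamma> G = \<gamma> H)"

definition nontrivial_functorial :: "(nat monoid \<Rightarrow> nat set) \<Rightarrow> bool" where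
  "nontrivial_functorial \<gamma> \<longleftrightarrow>
     (\<forall>G::nat monoid. group G \<and> finite (carrier G) \<and> carrier G \<noteq> {\<one>\<^bsub>G\<^esub>}
        \<longrightarrow> \<gamma> G \<noteq> {\<one>\<^bsub>G\<^esub>})"

definition F1 :: "(nat monoid \<Rightarrow> nat set) \<Rightarrow> bool" where
  "F1 \<gamma> \<longleftrightarrow>
     (\<forall>(G::nat monoid) (H::nat monoid) f. group G \<and> finite (carrier G) \<and> group H
        \<and> f \<in> hom G H \<and> f ` carrier G = carrier H \<longrightarrow> f ` \<gamma> G \<subseteq> \<gamma> H)"

definition F2 :: "(nat monoid \<Rightarrow> nat set) \<Rightarrow> bool" where
  "F2 \<gamma> \<longleftrightarrow>
     (\<forall>(G::nat monoid) N. group G \<and> finite (carrier G) \<and> N \<lhd> G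
        \<longrightarrow> \<gamma> (G\<lparr>carrier := N\<rparr>) \<subseteq> \<gamma> G)"

definition F5 :: "(nat monoid \<Rightarrow> nat set) \<Rightarrow> bool" where
  "F5 \<gamma> \<longleftrightarrow>
     (\<forall>(G::nat monoid) N. group G \<and> finite (carrier G) \<and> N \<lhd> G
        \<longrightarrow> \<gamma> G \<inter> N \<subseteq> \<gamma> (G\<lparr>carrier := N\<rparr>))"

definition enc_group :: "('a \<Rightarrow> nat) \<Rightarrow> 'a monoid \<Rightarrow> nat monoid" where
  "enc_group f G =
     \<lparr>carrier = f ` carrier G,
      monoid.mult = (\<lambda>x y. f (inv_into (carrier G) f x \<otimes>\<^bsub>G\<^esub> inv_into (carrier G) f y)),
      one = f \<one>\<^bsub>G\<^esub>\<rparr>"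

definition gext :: "(nat monoid \<Rightarrow> nat set) \<Rightarrow> 'a monoid \<Rightarrow> 'a set" where
  "gext \<gamma> G =
     (let f = (SOME f :: 'a \<Rightarrow> nat. inj_on f (carrier G))
      in {x \<in> carrier G. f x \<in> \<gamma> (enc_group f G)})"

fun gseries :: "(nat monoid \<Rightarrow> nat set) \<Rightarrow> 'a monoid \<Rightarrow> nat \<Rightarrow> 'a set" where
  "gseries \<gamma> G 0 = {\<one>\<^bsub>G\<^esub>}"
| "gseries \<gamma> G (Suc i) =
     {x \<in> carrier G. gseries \<gamma> G i #>\<^bsub>G\<^esub> x \<in> gext \<gamma> (G Mod gseries \<gamma> G i)}"

definition hgamma :: "(nat monoid \<Rightarrow> nat set) \<Rightarrow> 'a monoid \<Rightarrow> nat" where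
  "hgamma \<gamma> G = (LEAST h. gseries \<gamma> G h = carrier G)"

inductive subnormal :: "'a monoid \<Rightarrow> 'a set \<Rightarrow> bool" for G where
  refl: "subnormal G (carrier G)"
| step: "subnormal G K \<Longrightarrow> H \<lhd> G\<lparr>carrier := K\<rparr> \<Longrightarrow> subnormal G H"

definition internal_direct_product :: "'a monoid \<Rightarrow> nat set \<Rightarrow> (nat \<Rightarrow> 'a set) \<Rightarrow> bool" where
  "internal_direct_product G I A \<longleftrightarrow>
     (\<forall>i \<in> I. A i \<lhd> G) \<and>
     generate G (\<Union>i \<in> I. A i) = carrier G \<and>
     (\<forall>i \<in> I. A i \<inter> generate G (\<Union>j \<in> I - {i}. A j) = {\<one>\<^bsub>G\<^esub>})"

end

theory Submission
  imports Defs
begin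

lemma enc_iso:
  assumes G: "group G" and f: "inj_on f (carrier G)"
  shows "f \<in> iso G (enc_group f G)" "group (enc_group f G)"
proof -
  interpret group G by fact
  show iso: "f \<in> iso G (enc_group f G)"
    unfolding iso_iff using f by (auto simp: hom_def enc_group_def inv_into_f_f)
  show "group (enc_group f G)"
  proof (rule groupI)
    fix x y z assume "x \<in> carrier (enc_group f G)" "y \<in> carrier (enc_group f G)" "z \<in> carrier (enc_group f G)"
    then show "x \<otimes>\<^bsub>enc_group f G\<^esub> y \<otimes>\<^bsub>enc_group f G\<^esub> z = x \<otimes>\<^bsub>enc_group f G\<^esub> (y \<otimes>\<^bsub>enc_group f G\<^esub> z)"
      using f by (auto simp: enc_group_def inv_into_f_f m_assoc)
  next
    fix x assume "x \<in> carrier (enc_group f G)"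
    then show "\<exists>y\<in>carrier (enc_group f G). y \<otimes>\<^bsub>enc_group f G\<^esub> x = \<one>\<^bsub>enc_group f G\<^esub>"
    proof -
      from \<open>x \<in> carrier (enc_group f G)\<close> obtain a where a: "a \<in> carrier G" "x = f a" by (auto simp: enc_group_def)
      show ?thesis
        using f a by (auto simp: enc_group_def inv_into_f_f) (metis l_inv inv_closed)
    qed
  qed (use f in \<open>auto simp: enc_group_def inv_into_f_f\<close>)
qed

lemma exists_inj_nat: "finite A \<Longrightarrow> \<exists>f::'a \<Rightarrow> nat. inj_on f A"
  using finite_imp_inj_to_nat_seg by blast

lemma some_inj: assumes "finite (carrier G)" shows "inj_on (SOME f :: 'a \<Rightarrow> nat. inj_on f (carrier G)) (carrier G)"
  by (rule someI_ex[OF exists_inj_nat[OF assms]])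

lemma gext_some: "gext \<gamma> G = {x \<in> carrier G. (SOME f :: 'a \<Rightarrow> nat. inj_on f (carrier G)) x \<in> \<gamma> (enc_group (SOME f :: 'a \<Rightarrow> nat. inj_on f (carrier G)) G)}"
  by (simp add: gext_def Let_def)

lemma functorialD:
  assumes "functorial \<gamma>" "group G" "finite (carrier G)"
  shows "subgroup (\<gamma> G) G"
  using assms unfolding functorial_def by blast

lemma functorialD2:
  assumes "functorial \<gamma>" "group G" "finite (carrier G)" "group H" "f \<in> iso G H"
  shows "f ` \<gamma> G = \<gamma> H"
  using assms unfolding functorial_def by blast

lemma enc_finite: "finite (carrier G) \<Longrightarrow> finite (carrier (enc_group f G))"
  by (simp add: enc_group_def)

lemma iso_enc:
  assumes G: "group G" and H: "group H" and phi: "\<phi> \<in> iso G H"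
    and f: "inj_on f (carrier G)" and g: "inj_on g (carrier H)"
  shows "g \<circ> \<phi> \<circ> inv_into (carrier G) f \<in> iso (enc_group f G) (enc_group g H)"
proof -
  have "inv_into (carrier G) f \<in> iso (enc_group f G) G"
    using group.iso_set_sym[OF G enc_iso(1)[OF G f]] .
  then have "\<phi> \<circ> inv_into (carrier G) f \<in> iso (enc_group f G) H"
    using iso_set_trans phi by blast
  then show ?thesis using iso_set_trans enc_iso(1)[OF H g] by (metis comp_assoc)
qed

lemma core:
  assumes F: "functorial \<gamma>" and G: "group G" and fin: "finite (carrier G)" and H: "group H"
    and phi: "\<phi> \<in> iso G H"
    and f: "inj_on f (carrier G)" and g: "inj_on g (carrier H)" and x: "x \<in> carrier G"
  shows "f x \<in> \<gamma> (enc_group f G) \<longleftrightarrow> g (\<phi> x) \<in> \<gamma> (enc_group g H)"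
proof -
  let ?psi = "g \<circ> \<phi> \<circ> inv_into (carrier G) f"
  have psi: "?psi ` \<gamma> (enc_group f G) = \<gamma> (enc_group g H)"
    by (rule functorialD2[OF F enc_iso(2)[OF G f] enc_finite[OF fin] enc_iso(2)[OF H g] iso_enc[OF G H phi f g]])
  have sub: "\<gamma> (enc_group f G) \<subseteq> f ` carrier G"
    using subgroup.subset[OF functorialD[OF F enc_iso(2)[OF G f] enc_finite[OF fin]]]
    by (simp add: enc_group_def)
  have pinj: "inj_on \<phi> (carrier G)" and pc: "\<phi> ` carrier G = carrier H" using phi by (auto simp: iso_iff)
  show ?thesis
  proof
    assume "f x \<in> \<gamma> (enc_group f G)"
    then have "?psi (f x) \<in> \<gamma> (enc_group g H)" using psi by blast
    then show "g (\<phi> x) \<in> \<gamma> (enc_group g H)" using f x by simp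
  next
    assume "g (\<phi> x) \<in> \<gamma> (enc_group g H)"
    then obtain z where z: "z \<in> \<gamma> (enc_group f G)" "g (\<phi> x) = ?psi z" using psi by force
    then obtain x' where x': "x' \<in> carrier G" "z = f x'" using sub by blast
    then have "g (\<phi> x) = g (\<phi> x')" using z f by simp
    then have "\<phi> x = \<phi> x'" using g pc x x' by (auto dest: inj_onD)
    then have "x = x'" using pinj x x' by (auto dest: inj_onD)
    then show "f x \<in> \<gamma> (enc_group f G)" using z x' by simp
  qed
qed

lemma gext_char:
  assumes F: "functorial \<gamma>" and G: "group G" and fin: "finite (carrier G)"
    and f: "inj_on f (carrier G)"
  shows "gext \<gamma> G = {x \<in> carrier G. f x \<in> \<gamma> (enc_group f G)}"
  unfolding gext_some
  using core[OF F G fin G iso_set_refl some_inj[OF fin] f] by auto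

lemma gext_iso:
  assumes F: "functorial \<gamma>" and G: "group G" and fin: "finite (carrier G)" and H: "group H"
    and phi: "\<phi> \<in> iso G H"
  shows "\<phi> ` gext \<gamma> G = gext \<gamma> H"
proof -
  have pc: "\<phi> ` carrier G = carrier H" using phi by (auto simp: iso_iff)
  then have finH: "finite (carrier H)" using fin by (metis finite_imageI)
  obtain g :: "'b \<Rightarrow> nat" where g: "inj_on g (carrier H)" using exists_inj_nat[OF finH] by blast
  obtain f :: "'a \<Rightarrow> nat" where f: "inj_on f (carrier G)" using exists_inj_nat[OF fin] by blast
  show ?thesis
    unfolding gext_char[OF F G fin f] gext_char[OF F H finH g]
  proof (rule equalityI; rule subsetI)
    fix y assume "y \<in> \<phi> ` {x \<in> carrier G. f x \<in> \<gamma> (enc_group f G)}"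
    then show "y \<in> {x \<in> carrier H. g x \<in> \<gamma> (enc_group g H)}"
      using core[OF F G fin H phi f g] pc by auto
  next
    fix y assume y: "y \<in> {x \<in> carrier H. g x \<in> \<gamma> (enc_group g H)}"
    then obtain x where x: "x \<in> carrier G" "y = \<phi> x" using pc by auto
    then show "y \<in> \<phi> ` {x \<in> carrier G. f x \<in> \<gamma> (enc_group f G)}"
      using core[OF F G fin H phi f g x(1)] x(2) y by auto
  qed
qed

lemma gext_subgroup:
  assumes F: "functorial \<gamma>" and G: "group G" and fin: "finite (carrier G)"
  shows "subgroup (gext \<gamma> G) G"
proof -
  interpret group G by fact
  obtain f :: "'a \<Rightarrow> nat" where f: "inj_on f (carrier G)" using exists_inj_nat[OF fin] by blast
  let ?E = "enc_group f G"
  have E: "group ?E" using enc_iso[OF G f] by simp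
  have hom: "group_hom G ?E f" using enc_iso[OF G f] E G
    by (simp add: group_hom_def group_hom_axioms_def iso_iff)
  have sg: "subgroup (\<gamma> ?E) ?E" using functorialD[OF F E enc_finite[OF fin]] .
  show ?thesis unfolding gext_char[OF F G fin f]
  proof (rule subgroupI)
    show "{x \<in> carrier G. f x \<in> \<gamma> ?E} \<subseteq> carrier G" by blast
    show "{x \<in> carrier G. f x \<in> \<gamma> ?E} \<noteq> {}"
      using group_hom.hom_one[OF hom] subgroup.one_closed[OF sg] by auto
    fix a assume a: "a \<in> {x \<in> carrier G. f x \<in> \<gamma> ?E}"
    then show "inv\<^bsub>G\<^esub> a \<in> {x \<in> carrier G. f x \<in> \<gamma> ?E}"
      using group_hom.hom_inv[OF hom] subgroup.m_inv_closed[OF sg] by auto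
    fix b assume b: "b \<in> {x \<in> carrier G. f x \<in> \<gamma> ?E}"
    then show "a \<otimes>\<^bsub>G\<^esub> b \<in> {x \<in> carrier G. f x \<in> \<gamma> ?E}"
      using a group_hom.hom_mult[OF hom] subgroup.m_closed[OF sg] by auto
  qed
qed

lemma conj_iso:
  assumes G: "group G" and g: "g \<in> carrier G"
  shows "(\<lambda>x. g \<otimes>\<^bsub>G\<^esub> x \<otimes>\<^bsub>G\<^esub> inv\<^bsub>G\<^esub> g) \<in> iso G G"
proof -
  interpret group G by fact
  show ?thesis unfolding iso_iff
  proof (intro conjI)
    show "(\<lambda>x. g \<otimes>\<^bsub>G\<^esub> x \<otimes>\<^bsub>G\<^esub> inv\<^bsub>G\<^esub> g) \<in> hom G G"
    proof (rule homI)
      fix x y assume "x \<in> carrier G" "y \<in> carrier G"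
      then show "g \<otimes>\<^bsub>G\<^esub> (x \<otimes>\<^bsub>G\<^esub> y) \<otimes>\<^bsub>G\<^esub> inv\<^bsub>G\<^esub> g = g \<otimes>\<^bsub>G\<^esub> x \<otimes>\<^bsub>G\<^esub> inv\<^bsub>G\<^esub> g \<otimes>\<^bsub>G\<^esub> (g \<otimes>\<^bsub>G\<^esub> y \<otimes>\<^bsub>G\<^esub> inv\<^bsub>G\<^esub> g)"
        using g by (simp add: m_assoc) (simp add: m_assoc[symmetric])
    qed (use g in auto)
    show "(\<lambda>x. g \<otimes>\<^bsub>G\<^esub> x \<otimes>\<^bsub>G\<^esub> inv\<^bsub>G\<^esub> g) ` carrier G = carrier G"
    proof
      show "(\<lambda>x. g \<otimes>\<^bsub>G\<^esub> x \<otimes>\<^bsub>G\<^esub> inv\<^bsub>G\<^esub> g) ` carrier G \<subseteq> carrier G" using g by auto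
      show "carrier G \<subseteq> (\<lambda>x. g \<otimes>\<^bsub>G\<^esub> x \<otimes>\<^bsub>G\<^esub> inv\<^bsub>G\<^esub> g) ` carrier G"
      proof
        fix h assume h: "h \<in> carrier G"
        then have "h = g \<otimes>\<^bsub>G\<^esub> (inv\<^bsub>G\<^esub> g \<otimes>\<^bsub>G\<^esub> h \<otimes>\<^bsub>G\<^esub> g) \<otimes>\<^bsub>G\<^esub> inv\<^bsub>G\<^esub> g" using g conjugation_is_surj by simp
        then show "h \<in> (\<lambda>x. g \<otimes>\<^bsub>G\<^esub> x \<otimes>\<^bsub>G\<^esub> inv\<^bsub>G\<^esub> g) ` carrier G" using g h by blast
      qed
    qed
    show "inj_on (\<lambda>x. g \<otimes>\<^bsub>G\<^esub> x \<otimes>\<^bsub>G\<^esub> inv\<^bsub>G\<^esub> g) (carrier G)"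
      using g by (auto simp: inj_on_def)
  qed
qed

lemma gext_normal:
  assumes F: "functorial \<gamma>" and G: "group G" and fin: "finite (carrier G)"
  shows "gext \<gamma> G \<lhd> G"
proof -
  interpret group G by fact
  show ?thesis
  proof (rule normal_invI[OF gext_subgroup[OF F G fin]])
    fix x h assume x: "x \<in> carrier G" and h: "h \<in> gext \<gamma> G"
    have "(\<lambda>y. x \<otimes>\<^bsub>G\<^esub> y \<otimes>\<^bsub>G\<^esub> inv\<^bsub>G\<^esub> x) ` gext \<gamma> G = gext \<gamma> G"
      using gext_iso[OF F G fin G conj_iso[OF G x]] .
    then show "x \<otimes>\<^bsub>G\<^esub> h \<otimes>\<^bsub>G\<^esub> inv\<^bsub>G\<^esub> x \<in> gext \<gamma> G" using h by blast
  qed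
qed

lemma gext_nontrivial:
  assumes F: "functorial \<gamma>" and NT: "nontrivial_functorial \<gamma>" and G: "group G" and fin: "finite (carrier G)"
    and nt: "carrier G \<noteq> {\<one>\<^bsub>G\<^esub>}"
  shows "gext \<gamma> G \<noteq> {\<one>\<^bsub>G\<^esub>}"
proof
  assume eq: "gext \<gamma> G = {\<one>\<^bsub>G\<^esub>}"
  interpret group G by fact
  obtain f :: "'a \<Rightarrow> nat" where f: "inj_on f (carrier G)" using exists_inj_nat[OF fin] by blast
  let ?E = "enc_group f G"
  have E: "group ?E" using enc_iso[OF G f] by simp
  have sg: "subgroup (\<gamma> ?E) ?E" using functorialD[OF F E enc_finite[OF fin]] .
  have one: "\<one>\<^bsub>?E\<^esub> = f \<one>\<^bsub>G\<^esub>" by (simp add: enc_group_def)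
  have "carrier ?E \<noteq> {\<one>\<^bsub>?E\<^esub>}"
  proof
    assume "carrier ?E = {\<one>\<^bsub>?E\<^esub>}"
    then have "f ` carrier G = {f \<one>\<^bsub>G\<^esub>}" by (simp add: enc_group_def)
    then have "carrier G = {\<one>\<^bsub>G\<^esub>}" using f by (auto dest: inj_onD)
    then show False using nt by simp
  qed
  then have ne: "\<gamma> ?E \<noteq> {\<one>\<^bsub>?E\<^esub>}" using NT E enc_finite[OF fin] unfolding nontrivial_functorial_def by blast
  have "\<gamma> ?E \<subseteq> {\<one>\<^bsub>?E\<^esub>}"
  proof
    fix z assume z: "z \<in> \<gamma> ?E"
    then obtain x where x: "x \<in> carrier G" "z = f x" using subgroup.subset[OF sg] by (auto simp: enc_group_def)
    then have "x \<in> gext \<gamma> G" using z gext_char[OF F G fin f] by auto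
    then show "z \<in> {\<one>\<^bsub>?E\<^esub>}" using eq x one by auto
  qed
  then show False using ne subgroup.one_closed[OF sg] by blast
qed

lemma gext_F1:
  assumes F: "functorial \<gamma>" and F1: "F1 \<gamma>" and G: "group G" and fin: "finite (carrier G)" and H: "group H"
    and phi: "\<phi> \<in> hom G H" and onto: "\<phi> ` carrier G = carrier H"
  shows "\<phi> ` gext \<gamma> G \<subseteq> gext \<gamma> H"
proof -
  have finH: "finite (carrier H)" using fin onto by (metis finite_imageI)
  obtain g :: "'b \<Rightarrow> nat" where g: "inj_on g (carrier H)" using exists_inj_nat[OF finH] by blast
  obtain f :: "'a \<Rightarrow> nat" where f: "inj_on f (carrier G)" using exists_inj_nat[OF fin] by blast
  let ?psi = "g \<circ> \<phi> \<circ> inv_into (carrier G) f"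
  have "inv_into (carrier G) f \<in> iso (enc_group f G) G"
    using group.iso_set_sym[OF G enc_iso(1)[OF G f]] .
  then have h1: "\<phi> \<circ> inv_into (carrier G) f \<in> hom (enc_group f G) H"
    using hom_compose phi by (blast dest: iso_imp_homomorphism)
  have psi: "?psi \<in> hom (enc_group f G) (enc_group g H)"
    using hom_compose[OF h1 iso_imp_homomorphism[OF enc_iso(1)[OF H g]]] by (simp add: comp_assoc)
  have "?psi ` carrier (enc_group f G) = carrier (enc_group g H)"
    using onto f by (simp add: enc_group_def image_comp image_image) (metis image_image)
  then have "?psi ` \<gamma> (enc_group f G) \<subseteq> \<gamma> (enc_group g H)"
    using F1 psi enc_iso(2)[OF G f] enc_iso(2)[OF H g] enc_finite[OF fin] unfolding F1_def by blast
  then show ?thesis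
    unfolding gext_char[OF F G fin f] gext_char[OF F H finH g]
    using f onto by (auto simp: hom_in_carrier[OF phi])
qed

lemma id_iso:
  assumes "carrier A = carrier B" "\<And>x y. x \<in> carrier A \<Longrightarrow> y \<in> carrier A \<Longrightarrow> x \<otimes>\<^bsub>A\<^esub> y = x \<otimes>\<^bsub>B\<^esub> y"
  shows "(\<lambda>z. z) \<in> iso A B"
  using assms unfolding iso_iff by (auto simp: hom_def)

lemma enc_sub:
  assumes G: "group G" and fin: "finite (carrier G)" and N: "subgroup N G" and f: "inj_on f (carrier G)"
  shows "(\<lambda>z. z) \<in> iso (enc_group f (G\<lparr>carrier := N\<rparr>)) ((enc_group f G)\<lparr>carrier := f ` N\<rparr>)"
proof (rule id_iso)
  show "carrier (enc_group f (G\<lparr>carrier := N\<rparr>)) = carrier ((enc_group f G)\<lparr>carrier := f ` N\<rparr>)"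
    by (simp add: enc_group_def)
  have fN: "inj_on f N" using f subgroup.subset[OF N] inj_on_subset by blast
  fix x y assume "x \<in> carrier (enc_group f (G\<lparr>carrier := N\<rparr>))" "y \<in> carrier (enc_group f (G\<lparr>carrier := N\<rparr>))"
  then obtain a b where ab: "a \<in> N" "b \<in> N" "x = f a" "y = f b" by (auto simp: enc_group_def)
  have "a \<in> carrier G" "b \<in> carrier G" using ab subgroup.subset[OF N] by auto
  with ab show "x \<otimes>\<^bsub>enc_group f (G\<lparr>carrier := N\<rparr>)\<^esub> y = x \<otimes>\<^bsub>(enc_group f G)\<lparr>carrier := f ` N\<rparr>\<^esub> y"
    using f fN by (simp add: enc_group_def inv_into_f_f)
qed

lemma gext_sub_char:
  assumes F: "functorial \<gamma>" and G: "group G" and fin: "finite (carrier G)" and N: "N \<lhd> G"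
    and f: "inj_on f (carrier G)"
  shows "gext \<gamma> (G\<lparr>carrier := N\<rparr>) = {x \<in> N. f x \<in> \<gamma> ((enc_group f G)\<lparr>carrier := f ` N\<rparr>)}"
    and "f ` N \<lhd> enc_group f G"
proof -
  have sN: "subgroup N G" using N normal_imp_subgroup by blast
  have GN: "group (G\<lparr>carrier := N\<rparr>)" using subgroup.subgroup_is_group[OF sN G] .
  have finN: "finite (carrier (G\<lparr>carrier := N\<rparr>))" using fin subgroup.subset[OF sN] finite_subset by auto
  have fN: "inj_on f (carrier (G\<lparr>carrier := N\<rparr>))" using f subgroup.subset[OF sN] inj_on_subset by auto
  have E: "group (enc_group f G)" using enc_iso[OF G f] by simp
  show nE: "f ` N \<lhd> enc_group f G" using iso_normal_subgroup[OF enc_iso(1)[OF G f] G E N] .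
  have EN: "group ((enc_group f G)\<lparr>carrier := f ` N\<rparr>)"
    using subgroup.subgroup_is_group[OF normal_imp_subgroup[OF nE] E] .
  have "(\<lambda>z. z) ` \<gamma> (enc_group f (G\<lparr>carrier := N\<rparr>)) = \<gamma> ((enc_group f G)\<lparr>carrier := f ` N\<rparr>)"
    using functorialD2[OF F enc_iso(2)[OF GN fN] enc_finite[OF finN] EN enc_sub[OF G fin sN f]] .
  then show "gext \<gamma> (G\<lparr>carrier := N\<rparr>) = {x \<in> N. f x \<in> \<gamma> ((enc_group f G)\<lparr>carrier := f ` N\<rparr>)}"
    using gext_char[OF F GN finN fN] by simp
qed

lemma gext_F2:
  assumes F: "functorial \<gamma>" and F2: "F2 \<gamma>" and G: "group G" and fin: "finite (carrier G)" and N: "N \<lhd> G"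
  shows "gext \<gamma> (G\<lparr>carrier := N\<rparr>) \<subseteq> gext \<gamma> G"
proof -
  obtain f :: "'a \<Rightarrow> nat" where f: "inj_on f (carrier G)" using exists_inj_nat[OF fin] by blast
  have E: "group (enc_group f G)" using enc_iso[OF G f] by simp
  have "\<gamma> ((enc_group f G)\<lparr>carrier := f ` N\<rparr>) \<subseteq> \<gamma> (enc_group f G)"
    using F2 E enc_finite[OF fin] gext_sub_char(2)[OF F G fin N f] unfolding F2_def by blast
  then show ?thesis
    unfolding gext_sub_char(1)[OF F G fin N f] gext_char[OF F G fin f]
    using normal_imp_subgroup[OF N] subgroup.subset by blast
qed

lemma gext_F5:
  assumes F: "functorial \<gamma>" and F5: "F5 \<gamma>" and G: "group G" and fin: "finite (carrier G)" and N: "N \<lhd> G"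
  shows "gext \<gamma> G \<inter> N \<subseteq> gext \<gamma> (G\<lparr>carrier := N\<rparr>)"
proof -
  obtain f :: "'a \<Rightarrow> nat" where f: "inj_on f (carrier G)" using exists_inj_nat[OF fin] by blast
  have E: "group (enc_group f G)" using enc_iso[OF G f] by simp
  have "\<gamma> (enc_group f G) \<inter> f ` N \<subseteq> \<gamma> ((enc_group f G)\<lparr>carrier := f ` N\<rparr>)"
    using F5 E enc_finite[OF fin] gext_sub_char(2)[OF F G fin N f] unfolding F5_def by blast
  then show ?thesis
    unfolding gext_sub_char(1)[OF F G fin N f] gext_char[OF F G fin f]
    by blast
qed

lemma preimage_normal:
  assumes G: "group G" and H: "group H" and h: "h \<in> hom G H" and P: "P \<lhd> H"
  shows "{x \<in> carrier G. h x \<in> P} \<lhd> G"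
proof -
  interpret gh: group_hom G H h using G H h by (simp add: group_hom_def group_hom_axioms_def)
  have sP: "subgroup P H" using P normal_imp_subgroup by blast
  have sub: "subgroup {x \<in> carrier G. h x \<in> P} G"
  proof (rule gh.G.subgroupI)
    show "{x \<in> carrier G. h x \<in> P} \<noteq> {}" using subgroup.one_closed[OF sP] by auto
  next
    fix a assume "a \<in> {x \<in> carrier G. h x \<in> P}"
    then show "inv\<^bsub>G\<^esub> a \<in> {x \<in> carrier G. h x \<in> P}"
      using subgroup.m_inv_closed[OF sP] by auto
  next
    fix a b assume "a \<in> {x \<in> carrier G. h x \<in> P}" "b \<in> {x \<in> carrier G. h x \<in> P}"
    then show "a \<otimes>\<^bsub>G\<^esub> b \<in> {x \<in> carrier G. h x \<in> P}"
      using subgroup.m_closed[OF sP] by auto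
  qed blast
  show ?thesis
  proof (rule gh.G.normal_invI[OF sub])
    fix x a assume x: "x \<in> carrier G" and a: "a \<in> {x \<in> carrier G. h x \<in> P}"
    have a1: "a \<in> carrier G" "h a \<in> P" using a by auto
    have "h (x \<otimes>\<^bsub>G\<^esub> a \<otimes>\<^bsub>G\<^esub> inv\<^bsub>G\<^esub> x) = h x \<otimes>\<^bsub>H\<^esub> h a \<otimes>\<^bsub>H\<^esub> inv\<^bsub>H\<^esub> h x"
      using x a1 by (simp add: gh.hom_mult gh.hom_inv)
    also have "\<dots> \<in> P" using gh.H.normal_invE(2)[OF P] x a1 by (simp add: gh.hom_closed)
    finally show "x \<otimes>\<^bsub>G\<^esub> a \<otimes>\<^bsub>G\<^esub> inv\<^bsub>G\<^esub> x \<in> {x \<in> carrier G. h x \<in> P}"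
      using x a1 by simp
  qed
qed

lemma mod_group: "N \<lhd> G \<Longrightarrow> group (G Mod N)"
  using normal.factorgroup_is_group by blast

lemma mod_finite: "finite (carrier G) \<Longrightarrow> finite (carrier (G Mod N))"
  by (simp add: carrier_FactGroup)

lemma series_normal:
  assumes F: "functorial \<gamma>" and G: "group G" and fin: "finite (carrier G)"
  shows "gseries \<gamma> G k \<lhd> G"
proof (induction k)
  case 0
  then show ?case using group.one_is_normal[OF G] by simp
next
  case (Suc k)
  have Q: "group (G Mod gseries \<gamma> G k)" using mod_group[OF Suc] .
  have "gext \<gamma> (G Mod gseries \<gamma> G k) \<lhd> G Mod gseries \<gamma> G k"
    using gext_normal[OF F Q mod_finite[OF fin]] .
  then show ?case
    using preimage_normal[OF G Q normal.r_coset_hom_Mod[OF Suc]] by simp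
qed

lemma series_sub:
  assumes F: "functorial \<gamma>" and G: "group G" and fin: "finite (carrier G)"
  shows "gseries \<gamma> G k \<subseteq> carrier G"
  using normal_imp_subgroup[OF series_normal[OF F G fin]] subgroup.subset by blast

lemma series_Suc_mono:
  assumes F: "functorial \<gamma>" and G: "group G" and fin: "finite (carrier G)"
  shows "gseries \<gamma> G k \<subseteq> gseries \<gamma> G (Suc k)"
proof
  fix x assume x: "x \<in> gseries \<gamma> G k"
  have N: "gseries \<gamma> G k \<lhd> G" using series_normal[OF F G fin] .
  have sN: "subgroup (gseries \<gamma> G k) G" using normal_imp_subgroup[OF N] .
  have Q: "group (G Mod gseries \<gamma> G k)" using mod_group[OF N] .
  have "gseries \<gamma> G k #>\<^bsub>G\<^esub> x = gseries \<gamma> G k" using subgroup.rcos_const[OF sN G x] .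
  moreover have "gseries \<gamma> G k \<in> gext \<gamma> (G Mod gseries \<gamma> G k)"
    using subgroup.one_closed[OF gext_subgroup[OF F Q mod_finite[OF fin]]] by simp
  ultimately show "x \<in> gseries \<gamma> G (Suc k)" using x subgroup.subset[OF sN] by auto
qed

lemma series_mono:
  assumes F: "functorial \<gamma>" and G: "group G" and fin: "finite (carrier G)" and le: "k \<le> m"
  shows "gseries \<gamma> G k \<subseteq> gseries \<gamma> G m"
  using lift_Suc_mono_le[of "gseries \<gamma> G", OF series_Suc_mono[OF F G fin] le] .

lemma series_strict:
  assumes F: "functorial \<gamma>" and NT: "nontrivial_functorial \<gamma>" and G: "group G" and fin: "finite (carrier G)"
    and ne: "gseries \<gamma> G k \<noteq> carrier G"
  shows "gseries \<gamma> G k \<subset> gseries \<gamma> G (Suc k)"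
proof -
  let ?M = "gseries \<gamma> G k"
  have N: "?M \<lhd> G" using series_normal[OF F G fin] .
  have sN: "subgroup ?M G" using normal_imp_subgroup[OF N] .
  have Q: "group (G Mod ?M)" using mod_group[OF N] .
  obtain y where y: "y \<in> carrier G" "y \<notin> ?M" using ne subgroup.subset[OF sN] by blast
  have "y \<in> ?M #>\<^bsub>G\<^esub> y" using group.rcos_self[OF G y(1) sN] .
  then have "?M #>\<^bsub>G\<^esub> y \<noteq> ?M" using y by auto
  moreover have "?M #>\<^bsub>G\<^esub> y \<in> carrier (G Mod ?M)" using y by (simp add: carrier_FactGroup)
  ultimately have "carrier (G Mod ?M) \<noteq> {\<one>\<^bsub>G Mod ?M\<^esub>}" by auto
  then have ne2: "gext \<gamma> (G Mod ?M) \<noteq> {\<one>\<^bsub>G Mod ?M\<^esub>}"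
    using gext_nontrivial[OF F NT Q mod_finite[OF fin]] by blast
  have sg: "subgroup (gext \<gamma> (G Mod ?M)) (G Mod ?M)" using gext_subgroup[OF F Q mod_finite[OF fin]] .
  obtain C where C: "C \<in> gext \<gamma> (G Mod ?M)" "C \<noteq> ?M"
    using ne2 subgroup.one_closed[OF sg] by auto
  then have "C \<in> carrier (G Mod ?M)" using subgroup.subset[OF sg] by blast
  then obtain x where x: "x \<in> carrier G" "C = ?M #>\<^bsub>G\<^esub> x" by (auto simp: carrier_FactGroup)
  have "x \<in> gseries \<gamma> G (Suc k)" using x C by simp
  moreover have "x \<notin> ?M"
  proof
    assume "x \<in> ?M"
    then have "?M #>\<^bsub>G\<^esub> x = ?M" by (rule subgroup.rcos_const[OF sN G])
    with C x show False by simp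
  qed
  ultimately show ?thesis using series_Suc_mono[OF F G fin] by blast
qed

lemma series_reaches:
  assumes F: "functorial \<gamma>" and NT: "nontrivial_functorial \<gamma>" and G: "group G" and fin: "finite (carrier G)"
  shows "\<exists>h. gseries \<gamma> G h = carrier G"
proof (rule ccontr)
  assume "\<not> ?thesis"
  then have ne: "\<And>k. gseries \<gamma> G k \<noteq> carrier G" by blast
  have c1: "Suc k \<le> card (gseries \<gamma> G k)" for k
  proof (induction k)
    case 0
    then show ?case by (simp only: gseries.simps) simp
  next
    case (Suc k)
    have "finite (gseries \<gamma> G (Suc k))" using finite_subset[OF series_sub[OF F G fin] fin] .
    then have "card (gseries \<gamma> G k) < card (gseries \<gamma> G (Suc k))"
      by (rule psubset_card_mono[OF _ series_strict[OF F NT G fin ne]])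
    then show ?case using Suc.IH by linarith
  qed
  have c2: "card (gseries \<gamma> G k) \<le> card (carrier G)" for k
    using card_mono[OF fin series_sub[OF F G fin]] .
  show False using c1[of "card (carrier G)"] c2[of "card (carrier G)"] by linarith
qed

lemma hgamma_le_iff:
  assumes F: "functorial \<gamma>" and NT: "nontrivial_functorial \<gamma>" and G: "group G" and fin: "finite (carrier G)"
  shows "hgamma \<gamma> G \<le> h \<longleftrightarrow> gseries \<gamma> G h = carrier G"
proof
  assume le: "hgamma \<gamma> G \<le> h"
  have "gseries \<gamma> G (hgamma \<gamma> G) = carrier G"
    unfolding hgamma_def using LeastI_ex[OF series_reaches[OF F NT G fin]] .
  then show "gseries \<gamma> G h = carrier G"
    using series_mono[OF F G fin le] series_sub[OF F G fin] by blast
next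
  assume "gseries \<gamma> G h = carrier G"
  then show "hgamma \<gamma> G \<le> h" unfolding hgamma_def by (rule Least_le)
qed

lemma factor_hom:
  assumes G: "group G" and Q: "group Q" and th: "\<theta> \<in> hom G Q" and N: "N \<lhd> G"
    and triv: "\<And>n. n \<in> N \<Longrightarrow> \<theta> n = \<one>\<^bsub>Q\<^esub>"
  obtains \<psi> where "\<psi> \<in> hom (G Mod N) Q" "\<And>x. x \<in> carrier G \<Longrightarrow> \<psi> (N #>\<^bsub>G\<^esub> x) = \<theta> x"
    "\<psi> ` carrier (G Mod N) = \<theta> ` carrier G"
proof -
  have sN: "subgroup N G" using N normal_imp_subgroup by blast
  have cond: "\<theta> x = \<theta> y" if x: "x \<in> carrier G" and y: "y \<in> carrier G" and eq: "N #>\<^bsub>G\<^esub> x = N #>\<^bsub>G\<^esub> y" for x y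
  proof -
    have "x \<in> N #>\<^bsub>G\<^esub> y" using group.rcos_self[OF G x sN] eq by simp
    then obtain n where n: "n \<in> N" "x = n \<otimes>\<^bsub>G\<^esub> y" unfolding r_coset_def by blast
    have nG: "n \<in> carrier G" using n subgroup.subset[OF sN] by blast
    have "\<theta> x = \<theta> n \<otimes>\<^bsub>Q\<^esub> \<theta> y" using n nG y hom_mult[OF th] by simp
    also have "\<dots> = \<theta> y" using triv[OF n(1)] monoid.l_one[OF group.is_monoid[OF Q]] hom_in_carrier[OF th y] by simp
    finally show ?thesis .
  qed
  obtain \<psi> where psi: "\<psi> \<in> hom (G Mod N) Q" "\<And>x. x \<in> carrier G \<Longrightarrow> \<psi> (r_coset G N x) = \<theta> x"
    using FactGroup_universal[OF th N cond] by blast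
  have "\<psi> ` carrier (G Mod N) = \<theta> ` carrier G"
    unfolding carrier_FactGroup image_image using psi(2) by simp
  then show ?thesis using that psi by blast
qed

lemma series_epi:
  assumes F: "functorial \<gamma>" and F1: "F1 \<gamma>" and G: "group G" and fin: "finite (carrier G)" and H: "group H"
    and phi: "\<phi> \<in> hom G H" and onto: "\<phi> ` carrier G = carrier H"
  shows "\<phi> ` gseries \<gamma> G k \<subseteq> gseries \<gamma> H k"
proof (induction k)
  case 0
  have "group_hom G H \<phi>" using G H phi by (simp add: group_hom_def group_hom_axioms_def)
  then show ?case using group_hom.hom_one by simp
next
  case (Suc k)
  have finH: "finite (carrier H)" using fin onto by (metis finite_imageI)
  let ?M = "gseries \<gamma> G k" and ?L = "gseries \<gamma> H k"
  have M: "?M \<lhd> G" using series_normal[OF F G fin] .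
  have L: "?L \<lhd> H" using series_normal[OF F H finH] .
  have QG: "group (G Mod ?M)" using mod_group[OF M] .
  have QH: "group (H Mod ?L)" using mod_group[OF L] .
  let ?th = "(\<lambda>a. ?L #>\<^bsub>H\<^esub> a) \<circ> \<phi>"
  have th: "?th \<in> hom G (H Mod ?L)" using hom_compose[OF phi normal.r_coset_hom_Mod[OF L]] .
  have triv: "?th n = \<one>\<^bsub>H Mod ?L\<^esub>" if n: "n \<in> ?M" for n
  proof -
    have "\<phi> n \<in> ?L" using Suc n by blast
    then show ?thesis using subgroup.rcos_const[OF normal_imp_subgroup[OF L] H] by simp
  qed
  obtain \<psi> where psi: "\<psi> \<in> hom (G Mod ?M) (H Mod ?L)" "\<And>x. x \<in> carrier G \<Longrightarrow> \<psi> (?M #>\<^bsub>G\<^esub> x) = ?th x"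
    "\<psi> ` carrier (G Mod ?M) = ?th ` carrier G"
    using factor_hom[OF G QH th M triv] by blast
  have "?th ` carrier G = (\<lambda>a. ?L #>\<^bsub>H\<^esub> a) ` carrier H" using image_comp[of "\<lambda>a. ?L #>\<^bsub>H\<^esub> a" \<phi> "carrier G"] onto by simp
  then have "\<psi> ` carrier (G Mod ?M) = carrier (H Mod ?L)"
    unfolding psi(3) carrier_FactGroup[of H ?L] .
  then have sub: "\<psi> ` gext \<gamma> (G Mod ?M) \<subseteq> gext \<gamma> (H Mod ?L)"
    using gext_F1[OF F F1 QG mod_finite[OF fin] QH psi(1)] by blast
  show ?case
  proof
    fix y assume "y \<in> \<phi> ` gseries \<gamma> G (Suc k)"
    then obtain x where x: "x \<in> carrier G" "?M #>\<^bsub>G\<^esub> x \<in> gext \<gamma> (G Mod ?M)" "y = \<phi> x" by auto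
    then have "\<psi> (?M #>\<^bsub>G\<^esub> x) \<in> gext \<gamma> (H Mod ?L)" using sub by blast
    then have "?L #>\<^bsub>H\<^esub> \<phi> x \<in> gext \<gamma> (H Mod ?L)" using psi(2)[OF x(1)] by simp
    moreover have "\<phi> x \<in> carrier H" using hom_in_carrier[OF phi x(1)] .
    ultimately show "y \<in> gseries \<gamma> H (Suc k)" using x(3) by simp
  qed
qed

lemma quot_map:
  assumes G: "group G" and N: "N \<lhd> G" and M: "M \<lhd> G"
    and L: "L \<lhd> G\<lparr>carrier := N\<rparr>" and LM: "L \<subseteq> M"
  obtains \<psi> where "\<psi> \<in> hom ((G\<lparr>carrier := N\<rparr>) Mod L) ((G Mod M)\<lparr>carrier := (\<lambda>a. M #>\<^bsub>G\<^esub> a) ` N\<rparr>)"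
    "\<psi> ` carrier ((G\<lparr>carrier := N\<rparr>) Mod L) = (\<lambda>a. M #>\<^bsub>G\<^esub> a) ` N"
    "\<And>y. y \<in> N \<Longrightarrow> \<psi> (L #>\<^bsub>G\<^esub> y) = M #>\<^bsub>G\<^esub> y"
    "(\<lambda>a. M #>\<^bsub>G\<^esub> a) ` N \<lhd> G Mod M"
proof -
  interpret G: group G by fact
  have sN: "subgroup N G" using N normal_imp_subgroup by blast
  have sM: "subgroup M G" using M normal_imp_subgroup by blast
  have GN: "group (G\<lparr>carrier := N\<rparr>)" using subgroup.subgroup_is_group[OF sN G] .
  have QG: "group (G Mod M)" using mod_group[OF M] .
  have pi: "(\<lambda>a. M #>\<^bsub>G\<^esub> a) \<in> hom G (G Mod M)" using normal.r_coset_hom_Mod[OF M] .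
  have th: "(\<lambda>a. M #>\<^bsub>G\<^esub> a) \<in> hom (G\<lparr>carrier := N\<rparr>) (G Mod M)"
  proof (rule homI)
    fix x assume "x \<in> carrier (G\<lparr>carrier := N\<rparr>)"
    then show "M #>\<^bsub>G\<^esub> x \<in> carrier (G Mod M)" using hom_in_carrier[OF pi] subgroup.subset[OF sN] by auto
  next
    fix x y assume "x \<in> carrier (G\<lparr>carrier := N\<rparr>)" "y \<in> carrier (G\<lparr>carrier := N\<rparr>)"
    then show "M #>\<^bsub>G\<^esub> (x \<otimes>\<^bsub>G\<lparr>carrier := N\<rparr>\<^esub> y) = (M #>\<^bsub>G\<^esub> x) \<otimes>\<^bsub>G Mod M\<^esub> (M #>\<^bsub>G\<^esub> y)"
      using hom_mult[OF pi] subgroup.subset[OF sN] by auto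
  qed
  have triv: "M #>\<^bsub>G\<^esub> n = \<one>\<^bsub>G Mod M\<^esub>" if "n \<in> L" for n
    using subgroup.rcos_const[OF sM G] that LM by auto
  obtain \<psi> where psi: "\<psi> \<in> hom ((G\<lparr>carrier := N\<rparr>) Mod L) (G Mod M)"
    "\<And>x. x \<in> carrier (G\<lparr>carrier := N\<rparr>) \<Longrightarrow> \<psi> (L #>\<^bsub>G\<lparr>carrier := N\<rparr>\<^esub> x) = M #>\<^bsub>G\<^esub> x"
    "\<psi> ` carrier ((G\<lparr>carrier := N\<rparr>) Mod L) = (\<lambda>a. M #>\<^bsub>G\<^esub> a) ` carrier (G\<lparr>carrier := N\<rparr>)"
    using factor_hom[OF GN QG th L triv] by blast
  have gh: "group_hom G (G Mod M) (\<lambda>a. M #>\<^bsub>G\<^esub> a)"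
    using G QG pi by (simp add: group_hom_def group_hom_axioms_def)
  have "(\<lambda>a. M #>\<^bsub>G\<^esub> a) ` carrier G = carrier (G Mod M)" by (simp add: carrier_FactGroup)
  then have Qn: "(\<lambda>a. M #>\<^bsub>G\<^esub> a) ` N \<lhd> G Mod M"
    using normal.surj_hom_normal_subgroup[OF N gh] by blast
  have h2: "\<psi> \<in> hom ((G\<lparr>carrier := N\<rparr>) Mod L) ((G Mod M)\<lparr>carrier := (\<lambda>a. M #>\<^bsub>G\<^esub> a) ` N\<rparr>)"
    using psi(1) psi(3) unfolding hom_def by auto
  show ?thesis
    using that[OF h2] psi(2,3) Qn by simp
qed

lemma series_normal_F2:
  assumes F: "functorial \<gamma>" and F1: "F1 \<gamma>" and F2: "F2 \<gamma>" and G: "group G" and fin: "finite (carrier G)"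
    and N: "N \<lhd> G"
  shows "gseries \<gamma> (G\<lparr>carrier := N\<rparr>) k \<subseteq> gseries \<gamma> G k"
proof (induction k)
  case 0
  then show ?case by simp
next
  case (Suc k)
  have sN: "subgroup N G" using N normal_imp_subgroup by blast
  have GN: "group (G\<lparr>carrier := N\<rparr>)" using subgroup.subgroup_is_group[OF sN G] .
  have finN: "finite (carrier (G\<lparr>carrier := N\<rparr>))" using fin subgroup.subset[OF sN] finite_subset by auto
  let ?M = "gseries \<gamma> G k" and ?L = "gseries \<gamma> (G\<lparr>carrier := N\<rparr>) k"
  have M: "?M \<lhd> G" using series_normal[OF F G fin] .
  have L: "?L \<lhd> G\<lparr>carrier := N\<rparr>" using series_normal[OF F GN finN] .
  have QG: "group (G Mod ?M)" using mod_group[OF M] .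
  have QN: "group ((G\<lparr>carrier := N\<rparr>) Mod ?L)" using mod_group[OF L] .
  obtain \<psi> where psi: "\<psi> \<in> hom ((G\<lparr>carrier := N\<rparr>) Mod ?L) ((G Mod ?M)\<lparr>carrier := (\<lambda>a. ?M #>\<^bsub>G\<^esub> a) ` N\<rparr>)"
    "\<psi> ` carrier ((G\<lparr>carrier := N\<rparr>) Mod ?L) = (\<lambda>a. ?M #>\<^bsub>G\<^esub> a) ` N"
    "\<And>y. y \<in> N \<Longrightarrow> \<psi> (?L #>\<^bsub>G\<^esub> y) = ?M #>\<^bsub>G\<^esub> y"
    "(\<lambda>a. ?M #>\<^bsub>G\<^esub> a) ` N \<lhd> G Mod ?M"
    using quot_map[OF G N M L Suc] by blast
  have QQ: "group ((G Mod ?M)\<lparr>carrier := (\<lambda>a. ?M #>\<^bsub>G\<^esub> a) ` N\<rparr>)"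
    using subgroup.subgroup_is_group[OF normal_imp_subgroup[OF psi(4)] QG] .
  have s1: "\<psi> ` gext \<gamma> ((G\<lparr>carrier := N\<rparr>) Mod ?L) \<subseteq> gext \<gamma> ((G Mod ?M)\<lparr>carrier := (\<lambda>a. ?M #>\<^bsub>G\<^esub> a) ` N\<rparr>)"
    using gext_F1[OF F F1 QN mod_finite[OF finN] QQ psi(1)] psi(2) by simp
  have s2: "gext \<gamma> ((G Mod ?M)\<lparr>carrier := (\<lambda>a. ?M #>\<^bsub>G\<^esub> a) ` N\<rparr>) \<subseteq> gext \<gamma> (G Mod ?M)"
    using gext_F2[OF F F2 QG mod_finite[OF fin] psi(4)] .
  show ?case
  proof
    fix x assume x: "x \<in> gseries \<gamma> (G\<lparr>carrier := N\<rparr>) (Suc k)"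
    then have xN: "x \<in> N" and xq: "?L #>\<^bsub>G\<^esub> x \<in> gext \<gamma> ((G\<lparr>carrier := N\<rparr>) Mod ?L)" by auto
    then have "\<psi> (?L #>\<^bsub>G\<^esub> x) \<in> gext \<gamma> (G Mod ?M)" using s1 s2 by blast
    then have "?M #>\<^bsub>G\<^esub> x \<in> gext \<gamma> (G Mod ?M)" using psi(3)[OF xN] by simp
    moreover have "x \<in> carrier G" using xN subgroup.subset[OF sN] by blast
    ultimately show "x \<in> gseries \<gamma> G (Suc k)" by simp
  qed
qed

lemma series_F5:
  assumes F: "functorial \<gamma>" and F1: "F1 \<gamma>" and F2: "F2 \<gamma>" and F5: "F5 \<gamma>"
    and G: "group G" and fin: "finite (carrier G)" and N: "N \<lhd> G"
  shows "gseries \<gamma> G k \<inter> N \<subseteq> gseries \<gamma> (G\<lparr>carrier := N\<rparr>) k"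
proof (induction k)
  case 0
  then show ?case by auto
next
  case (Suc k)
  interpret G: group G by fact
  have sN: "subgroup N G" using N normal_imp_subgroup by blast
  have GN: "group (G\<lparr>carrier := N\<rparr>)" using subgroup.subgroup_is_group[OF sN G] .
  have finN: "finite (carrier (G\<lparr>carrier := N\<rparr>))" using fin subgroup.subset[OF sN] finite_subset by auto
  let ?M = "gseries \<gamma> G k" and ?L = "gseries \<gamma> (G\<lparr>carrier := N\<rparr>) k"
  let ?Q = "(\<lambda>a. ?M #>\<^bsub>G\<^esub> a) ` N"
  have M: "?M \<lhd> G" using series_normal[OF F G fin] .
  have sM: "subgroup ?M G" using M normal_imp_subgroup by blast
  have L: "?L \<lhd> G\<lparr>carrier := N\<rparr>" using series_normal[OF F GN finN] .
  have sL: "subgroup ?L G" using G.incl_subgroup[OF sN normal_imp_subgroup[OF L]] .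
  have LM: "?L \<subseteq> ?M" using series_normal_F2[OF F F1 F2 G fin N] .
  have LN: "?L \<subseteq> N" using subgroup.subset[OF normal_imp_subgroup[OF L]] by simp
  have QG: "group (G Mod ?M)" using mod_group[OF M] .
  have QN: "group ((G\<lparr>carrier := N\<rparr>) Mod ?L)" using mod_group[OF L] .
  obtain \<psi> where psi: "\<psi> \<in> hom ((G\<lparr>carrier := N\<rparr>) Mod ?L) ((G Mod ?M)\<lparr>carrier := ?Q\<rparr>)"
    "\<psi> ` carrier ((G\<lparr>carrier := N\<rparr>) Mod ?L) = ?Q"
    "\<And>y. y \<in> N \<Longrightarrow> \<psi> (?L #>\<^bsub>G\<^esub> y) = ?M #>\<^bsub>G\<^esub> y"
    "?Q \<lhd> G Mod ?M"
    using quot_map[OF G N M L LM] by blast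
  have QQ: "group ((G Mod ?M)\<lparr>carrier := ?Q\<rparr>)"
    using subgroup.subgroup_is_group[OF normal_imp_subgroup[OF psi(4)] QG] .
  have carN: "carrier ((G\<lparr>carrier := N\<rparr>) Mod ?L) = (\<lambda>y. ?L #>\<^bsub>G\<^esub> y) ` N"
    by (simp only: carrier_FactGroup r_coset_consistent) simp
  have key: "?L #>\<^bsub>G\<^esub> y = ?L #>\<^bsub>G\<^esub> z"
    if y: "y \<in> N" and z: "z \<in> N" and eq: "?M #>\<^bsub>G\<^esub> y = ?M #>\<^bsub>G\<^esub> z" for y z
  proof -
    have yG: "y \<in> carrier G" and zG: "z \<in> carrier G" using y z subgroup.subset[OF sN] by auto
    have "y \<in> ?M #>\<^bsub>G\<^esub> z" using G.rcos_self[OF yG sM] eq by simp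
    then have "y \<otimes>\<^bsub>G\<^esub> inv\<^bsub>G\<^esub> z \<in> ?M" using subgroup.rcos_module_imp[OF sM G zG] by blast
    moreover have "y \<otimes>\<^bsub>G\<^esub> inv\<^bsub>G\<^esub> z \<in> N" using y z subgroup.m_closed[OF sN] subgroup.m_inv_closed[OF sN] by blast
    ultimately have "y \<otimes>\<^bsub>G\<^esub> inv\<^bsub>G\<^esub> z \<in> ?L" using Suc by blast
    then have "y \<in> ?L #>\<^bsub>G\<^esub> z" using subgroup.rcos_module_rev[OF sL G zG yG] by blast
    then show ?thesis using G.repr_independence[OF _ zG sL] by simp
  qed
  have inj: "inj_on \<psi> (carrier ((G\<lparr>carrier := N\<rparr>) Mod ?L))"
  proof (rule inj_onI)
    fix C1 C2 assume C1: "C1 \<in> carrier ((G\<lparr>carrier := N\<rparr>) Mod ?L)" and C2: "C2 \<in> carrier ((G\<lparr>carrier := N\<rparr>) Mod ?L)"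
      and eq: "\<psi> C1 = \<psi> C2"
    obtain y where y: "y \<in> N" "C1 = ?L #>\<^bsub>G\<^esub> y" using C1 carN by auto
    obtain z where z: "z \<in> N" "C2 = ?L #>\<^bsub>G\<^esub> z" using C2 carN by auto
    show "C1 = C2" using key[OF y(1) z(1)] eq psi(3)[OF y(1)] psi(3)[OF z(1)] y(2) z(2) by simp
  qed
  have iso: "\<psi> \<in> iso ((G\<lparr>carrier := N\<rparr>) Mod ?L) ((G Mod ?M)\<lparr>carrier := ?Q\<rparr>)"
    unfolding iso_iff by (intro conjI psi(1) inj) (simp add: psi(2))
  have e1: "\<psi> ` gext \<gamma> ((G\<lparr>carrier := N\<rparr>) Mod ?L) = gext \<gamma> ((G Mod ?M)\<lparr>carrier := ?Q\<rparr>)"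
    using gext_iso[OF F QN mod_finite[OF finN] QQ iso] .
  have e2: "gext \<gamma> (G Mod ?M) \<inter> ?Q \<subseteq> gext \<gamma> ((G Mod ?M)\<lparr>carrier := ?Q\<rparr>)"
    using gext_F5[OF F F5 QG mod_finite[OF fin] psi(4)] .
  have gsub: "gext \<gamma> ((G\<lparr>carrier := N\<rparr>) Mod ?L) \<subseteq> carrier ((G\<lparr>carrier := N\<rparr>) Mod ?L)"
    using subgroup.subset[OF gext_subgroup[OF F QN mod_finite[OF finN]]] .
  show ?case
  proof
    fix x assume x: "x \<in> gseries \<gamma> G (Suc k) \<inter> N"
    then have xN: "x \<in> N" and xq: "?M #>\<^bsub>G\<^esub> x \<in> gext \<gamma> (G Mod ?M)" by auto
    then have "?M #>\<^bsub>G\<^esub> x \<in> gext \<gamma> ((G Mod ?M)\<lparr>carrier := ?Q\<rparr>)" using e2 by blast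
    then obtain C where C: "C \<in> gext \<gamma> ((G\<lparr>carrier := N\<rparr>) Mod ?L)" "\<psi> C = ?M #>\<^bsub>G\<^esub> x"
      using e1 by (metis (no_types, lifting) imageE)
    have Cc: "C \<in> carrier ((G\<lparr>carrier := N\<rparr>) Mod ?L)" using C gsub by blast
    have xc: "?L #>\<^bsub>G\<^esub> x \<in> carrier ((G\<lparr>carrier := N\<rparr>) Mod ?L)" using carN xN by blast
    have "C = ?L #>\<^bsub>G\<^esub> x" using inj_onD[OF inj _ Cc xc] C(2) psi(3)[OF xN] by simp
    then have "?L #>\<^bsub>G\<^esub> x \<in> gext \<gamma> ((G\<lparr>carrier := N\<rparr>) Mod ?L)" using C(1) by simp
    then show "x \<in> gseries \<gamma> (G\<lparr>carrier := N\<rparr>) (Suc k)" using xN by simp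
  qed
qed

lemma subnormal_props:
  assumes F: "functorial \<gamma>" and F1: "F1 \<gamma>" and F2: "F2 \<gamma>"
    and G: "group G" and fin: "finite (carrier G)" and A: "subnormal G A"
  shows "subgroup A G \<and> (\<forall>k. gseries \<gamma> (G\<lparr>carrier := A\<rparr>) k \<subseteq> gseries \<gamma> G k)
    \<and> (F5 \<gamma> \<longrightarrow> (\<forall>k. gseries \<gamma> G k \<inter> A \<subseteq> gseries \<gamma> (G\<lparr>carrier := A\<rparr>) k))"
  using A
proof (induction rule: subnormal.induct)
  case refl
  have "G\<lparr>carrier := carrier G\<rparr> = G" by simp
  then show ?case using group.subgroup_self[OF G] series_sub[OF F G fin] by auto
next
  case (step K H)
  have sK: "subgroup K G" using step.IH by blast
  have GK: "group (G\<lparr>carrier := K\<rparr>)" using subgroup.subgroup_is_group[OF sK G] .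
  have finK: "finite (carrier (G\<lparr>carrier := K\<rparr>))" using fin subgroup.subset[OF sK] finite_subset by auto
  have sH: "subgroup H G" using group.incl_subgroup[OF G sK normal_imp_subgroup[OF step.hyps(2)]] .
  have HK: "H \<subseteq> K" using subgroup.subset[OF normal_imp_subgroup[OF step.hyps(2)]] by simp
  have a1: "gseries \<gamma> (G\<lparr>carrier := H\<rparr>) k \<subseteq> gseries \<gamma> G k" for k
    using series_normal_F2[OF F F1 F2 GK finK step.hyps(2), of k] step.IH by auto
  have a2: "gseries \<gamma> G k \<inter> H \<subseteq> gseries \<gamma> (G\<lparr>carrier := H\<rparr>) k" if F5: "F5 \<gamma>" for k
  proof -
    have "gseries \<gamma> G k \<inter> H \<subseteq> gseries \<gamma> (G\<lparr>carrier := K\<rparr>) k \<inter> H"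
      using step.IH F5 HK by blast
    also have "\<dots> \<subseteq> gseries \<gamma> (G\<lparr>carrier := H\<rparr>) k"
      using series_F5[OF F F1 F2 F5 GK finK step.hyps(2), of k] by simp
    finally show ?thesis .
  qed
  show ?case using sH a1 a2 by blast
qed

lemma preimage_subgroup:
  assumes G: "group G" and H: "group H" and h: "h \<in> hom G H" and P: "subgroup P H"
  shows "subgroup {x \<in> carrier G. h x \<in> P} G"
proof -
  interpret gh: group_hom G H h using G H h by (simp add: group_hom_def group_hom_axioms_def)
  show ?thesis
  proof (rule gh.G.subgroupI)
    show "{x \<in> carrier G. h x \<in> P} \<noteq> {}" using subgroup.one_closed[OF P] by auto
  next
    fix a assume "a \<in> {x \<in> carrier G. h x \<in> P}"
    then show "inv\<^bsub>G\<^esub> a \<in> {x \<in> carrier G. h x \<in> P}"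
      using subgroup.m_inv_closed[OF P] by auto
  next
    fix a b assume "a \<in> {x \<in> carrier G. h x \<in> P}" "b \<in> {x \<in> carrier G. h x \<in> P}"
    then show "a \<otimes>\<^bsub>G\<^esub> b \<in> {x \<in> carrier G. h x \<in> P}"
      using subgroup.m_closed[OF P] by auto
  qed blast
qed

lemma direct_factor_epi:
  assumes G: "group G" and idp: "internal_direct_product G I A" and i: "i \<in> I"
  shows "\<exists>\<phi>. \<phi> \<in> hom G (G\<lparr>carrier := A i\<rparr>) \<and> \<phi> ` carrier G = A i"
proof -
  interpret G: group G by fact
  have nA: "\<And>j. j \<in> I \<Longrightarrow> A j \<lhd> G" using idp unfolding internal_direct_product_def by blast
  have gen: "generate G (\<Union>j \<in> I. A j) = carrier G" using idp unfolding internal_direct_product_def by blast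
  let ?U = "\<Union>j \<in> I - {i}. A j"
  let ?M = "generate G ?U"
  have meet: "A i \<inter> ?M = {\<one>\<^bsub>G\<^esub>}" using idp i unfolding internal_direct_product_def by blast
  have Usub: "?U \<subseteq> carrier G" using nA normal_imp_subgroup subgroup.subset by blast
  have M: "?M \<lhd> G"
  proof (rule G.normal_generateI[OF Usub])
    fix h g assume h: "h \<in> ?U" and g: "g \<in> carrier G"
    then obtain j where j: "j \<in> I - {i}" "h \<in> A j" by blast
    then have "g \<otimes>\<^bsub>G\<^esub> h \<otimes>\<^bsub>G\<^esub> inv\<^bsub>G\<^esub> g \<in> A j" using G.normal_invE(2)[OF nA] g by blast
    then show "g \<otimes>\<^bsub>G\<^esub> h \<otimes>\<^bsub>G\<^esub> inv\<^bsub>G\<^esub> g \<in> ?U" using j by blast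
  qed
  have sM: "subgroup ?M G" using normal_imp_subgroup[OF M] .
  have sA: "subgroup (A i) G" using normal_imp_subgroup[OF nA[OF i]] .
  have GA: "group (G\<lparr>carrier := A i\<rparr>)" using subgroup.subgroup_is_group[OF sA G] .
  have QG: "group (G Mod ?M)" using mod_group[OF M] .
  have pi: "(\<lambda>a. ?M #>\<^bsub>G\<^esub> a) \<in> hom G (G Mod ?M)" using normal.r_coset_hom_Mod[OF M] .
  have gh: "group_hom G (G Mod ?M) (\<lambda>a. ?M #>\<^bsub>G\<^esub> a)"
    using G QG pi by (simp add: group_hom_def group_hom_axioms_def)
  have al: "(\<lambda>a. ?M #>\<^bsub>G\<^esub> a) \<in> hom (G\<lparr>carrier := A i\<rparr>) (G Mod ?M)"
  proof (rule homI)
    fix x assume "x \<in> carrier (G\<lparr>carrier := A i\<rparr>)"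
    then show "?M #>\<^bsub>G\<^esub> x \<in> carrier (G Mod ?M)" using hom_in_carrier[OF pi] subgroup.subset[OF sA] by auto
  next
    fix x y assume "x \<in> carrier (G\<lparr>carrier := A i\<rparr>)" "y \<in> carrier (G\<lparr>carrier := A i\<rparr>)"
    then show "?M #>\<^bsub>G\<^esub> (x \<otimes>\<^bsub>G\<lparr>carrier := A i\<rparr>\<^esub> y) = (?M #>\<^bsub>G\<^esub> x) \<otimes>\<^bsub>G Mod ?M\<^esub> (?M #>\<^bsub>G\<^esub> y)"
      using hom_mult[OF pi] subgroup.subset[OF sA] by auto
  qed
  have inj: "inj_on (\<lambda>a. ?M #>\<^bsub>G\<^esub> a) (A i)"
  proof (rule inj_onI)
    fix a b assume a: "a \<in> A i" and b: "b \<in> A i" and eq: "?M #>\<^bsub>G\<^esub> a = ?M #>\<^bsub>G\<^esub> b"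
    have aG: "a \<in> carrier G" and bG: "b \<in> carrier G" using a b subgroup.subset[OF sA] by auto
    have "a \<in> ?M #>\<^bsub>G\<^esub> b" using G.rcos_self[OF aG sM] eq by simp
    then have "a \<otimes>\<^bsub>G\<^esub> inv\<^bsub>G\<^esub> b \<in> ?M" using subgroup.rcos_module_imp[OF sM G bG] by blast
    moreover have "a \<otimes>\<^bsub>G\<^esub> inv\<^bsub>G\<^esub> b \<in> A i" using a b subgroup.m_closed[OF sA] subgroup.m_inv_closed[OF sA] by blast
    ultimately have "a \<otimes>\<^bsub>G\<^esub> inv\<^bsub>G\<^esub> b = \<one>\<^bsub>G\<^esub>" using meet by blast
    then show "a = b" using aG bG G.inv_equality G.inv_inv by (metis G.inv_closed G.r_inv G.r_cancel)
  qed
  let ?P = "{x \<in> carrier G. ?M #>\<^bsub>G\<^esub> x \<in> (\<lambda>a. ?M #>\<^bsub>G\<^esub> a) ` A i}"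
  have sP: "subgroup ?P G"
    using preimage_subgroup[OF G QG pi group_hom.subgroup_img_is_subgroup[OF gh sA]] .
  have UP: "(\<Union>j \<in> I. A j) \<subseteq> ?P"
  proof
    fix x assume "x \<in> (\<Union>j \<in> I. A j)"
    then obtain j where j: "j \<in> I" "x \<in> A j" by blast
    have xG: "x \<in> carrier G" using j nA normal_imp_subgroup subgroup.subset by blast
    show "x \<in> ?P"
    proof (cases "j = i")
      case True
      then show ?thesis using j xG by blast
    next
      case False
      then have "x \<in> ?M" using j generate.incl[of x ?U G] by blast
      then have "?M #>\<^bsub>G\<^esub> x = ?M #>\<^bsub>G\<^esub> \<one>\<^bsub>G\<^esub>"
        using subgroup.rcos_const[OF sM G] G.coset_mult_one subgroup.subset[OF sM] by simp
      moreover have "\<one>\<^bsub>G\<^esub> \<in> A i" using subgroup.one_closed[OF sA] .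
      ultimately show ?thesis using xG by blast
    qed
  qed
  have "carrier G \<subseteq> ?P" using G.generate_subgroup_incl[OF UP sP] gen by simp
  then have onto: "(\<lambda>a. ?M #>\<^bsub>G\<^esub> a) ` A i = carrier (G Mod ?M)"
    using hom_in_carrier[OF pi] subgroup.subset[OF sA] by (auto simp: carrier_FactGroup)
  have iso: "(\<lambda>a. ?M #>\<^bsub>G\<^esub> a) \<in> iso (G\<lparr>carrier := A i\<rparr>) (G Mod ?M)"
    unfolding iso_iff using al inj onto by simp
  let ?b = "inv_into (carrier (G\<lparr>carrier := A i\<rparr>)) (\<lambda>a. ?M #>\<^bsub>G\<^esub> a)"
  have biso: "?b \<in> iso (G Mod ?M) (G\<lparr>carrier := A i\<rparr>)" using group.iso_set_sym[OF GA iso] .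
  have "?b \<circ> (\<lambda>a. ?M #>\<^bsub>G\<^esub> a) \<in> hom G (G\<lparr>carrier := A i\<rparr>)"
    using hom_compose[OF pi iso_imp_homomorphism[OF biso]] .
  moreover have "(?b \<circ> (\<lambda>a. ?M #>\<^bsub>G\<^esub> a)) ` carrier G = A i"
  proof -
    have "(?b \<circ> (\<lambda>a. ?M #>\<^bsub>G\<^esub> a)) ` carrier G = ?b ` carrier (G Mod ?M)"
      by (simp add: carrier_FactGroup image_comp)
    also have "\<dots> = A i" using biso unfolding iso_iff by simp
    finally show ?thesis .
  qed
  ultimately show ?thesis by blast
qed

lemma sub_group_fin:
  assumes G: "group G" and fin: "finite (carrier G)" and A: "subgroup A G"
  shows "group (G\<lparr>carrier := A\<rparr>)" "finite (carrier (G\<lparr>carrier := A\<rparr>))"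
  using subgroup.subgroup_is_group[OF A G] fin subgroup.subset[OF A] finite_subset by auto

lemma upper_bound:
  assumes F: "functorial \<gamma>" and NT: "nontrivial_functorial \<gamma>" and F1: "F1 \<gamma>" and F2: "F2 \<gamma>"
    and G: "group G" and fin: "finite (carrier G)" and I: "finite I" "I \<noteq> {}"
    and sn: "\<forall>i \<in> I. subnormal G (A i)" and gen: "generate G (\<Union>i \<in> I. A i) = carrier G"
  shows "hgamma \<gamma> G \<le> Max ((\<lambda>i. hgamma \<gamma> (G\<lparr>carrier := A i\<rparr>)) ` I)"
proof -
  let ?h = "Max ((\<lambda>i. hgamma \<gamma> (G\<lparr>carrier := A i\<rparr>)) ` I)"
  have U: "(\<Union>i \<in> I. A i) \<subseteq> gseries \<gamma> G ?h"
  proof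
    fix x assume "x \<in> (\<Union>i \<in> I. A i)"
    then obtain i where i: "i \<in> I" "x \<in> A i" by blast
    have P: "subgroup (A i) G \<and> (\<forall>k. gseries \<gamma> (G\<lparr>carrier := A i\<rparr>) k \<subseteq> gseries \<gamma> G k)"
      using subnormal_props[OF F F1 F2 G fin] sn i by blast
    note GA = sub_group_fin[OF G fin conjunct1[OF P]]
    have "hgamma \<gamma> (G\<lparr>carrier := A i\<rparr>) \<le> ?h" using I i by simp
    then have "gseries \<gamma> (G\<lparr>carrier := A i\<rparr>) ?h = A i"
      using hgamma_le_iff[OF F NT GA] by simp
    then show "x \<in> gseries \<gamma> G ?h" using P i by blast
  qed
  have "carrier G \<subseteq> gseries \<gamma> G ?h"
    using group.generate_subgroup_incl[OF G U normal_imp_subgroup[OF series_normal[OF F G fin]]] gen by simp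
  then have "gseries \<gamma> G ?h = carrier G" using series_sub[OF F G fin] by blast
  then show ?thesis using hgamma_le_iff[OF F NT G fin] by blast
qed

lemma lower_bound_F5:
  assumes F: "functorial \<gamma>" and NT: "nontrivial_functorial \<gamma>" and F1: "F1 \<gamma>" and F2: "F2 \<gamma>" and F5: "F5 \<gamma>"
    and G: "group G" and fin: "finite (carrier G)" and sn: "subnormal G A"
  shows "hgamma \<gamma> (G\<lparr>carrier := A\<rparr>) \<le> hgamma \<gamma> G"
proof -
  have P: "subgroup A G \<and> (\<forall>k. gseries \<gamma> G k \<inter> A \<subseteq> gseries \<gamma> (G\<lparr>carrier := A\<rparr>) k)"
    using subnormal_props[OF F F1 F2 G fin sn] F5 by blast
  note GA = sub_group_fin[OF G fin conjunct1[OF P]]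
  have "gseries \<gamma> G (hgamma \<gamma> G) = carrier G" using hgamma_le_iff[OF F NT G fin] by blast
  then have "A \<subseteq> gseries \<gamma> (G\<lparr>carrier := A\<rparr>) (hgamma \<gamma> G)"
    using P subgroup.subset[OF conjunct1[OF P]] by blast
  then have "gseries \<gamma> (G\<lparr>carrier := A\<rparr>) (hgamma \<gamma> G) = carrier (G\<lparr>carrier := A\<rparr>)"
    using series_sub[OF F GA] by auto
  then show ?thesis using hgamma_le_iff[OF F NT GA] by blast
qed

lemma lower_bound_direct:
  assumes F: "functorial \<gamma>" and NT: "nontrivial_functorial \<gamma>" and F1: "F1 \<gamma>"
    and G: "group G" and fin: "finite (carrier G)" and idp: "internal_direct_product G I A" and i: "i \<in> I"
  shows "hgamma \<gamma> (G\<lparr>carrier := A i\<rparr>) \<le> hgamma \<gamma> G"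
proof -
  have sA: "subgroup (A i) G" using idp i normal_imp_subgroup unfolding internal_direct_product_def by blast
  note GA = sub_group_fin[OF G fin sA]
  obtain \<phi> where phi: "\<phi> \<in> hom G (G\<lparr>carrier := A i\<rparr>)" "\<phi> ` carrier G = A i"
    using direct_factor_epi[OF G idp i] by blast
  have "gseries \<gamma> G (hgamma \<gamma> G) = carrier G" using hgamma_le_iff[OF F NT G fin] by blast
  then have "A i \<subseteq> gseries \<gamma> (G\<lparr>carrier := A i\<rparr>) (hgamma \<gamma> G)"
    using series_epi[OF F F1 G fin GA(1) phi(1)] phi(2) by force
  then have "gseries \<gamma> (G\<lparr>carrier := A i\<rparr>) (hgamma \<gamma> G) = carrier (G\<lparr>carrier := A i\<rparr>)"
    using series_sub[OF F GA] by auto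
  then show ?thesis using hgamma_le_iff[OF F NT GA] by blast
qed

theorem theorem8:
  fixes \<gamma> :: "nat monoid \<Rightarrow> nat set"
  assumes "functorial \<gamma>" and "nontrivial_functorial \<gamma>" and "F1 \<gamma>" and "F2 \<gamma>"
  shows "(\<forall>(G::'a monoid) (A::nat \<Rightarrow> 'a set) n.
           group G \<and> finite (carrier G) \<and> 1 \<le> n \<and>
           internal_direct_product G {1..n} A \<longrightarrow>
           hgamma \<gamma> G = Max ((\<lambda>i. hgamma \<gamma> (G\<lparr>carrier := A i\<rparr>)) ` {1..n}))
       \<and> (\<forall>(G::'a monoid) (A::nat \<Rightarrow> 'a set) n.
           group G \<and> finite (carrier G) \<and> 1 \<le> n \<and>
           (\<forall>i \<in> {1..n}. subnormal G (A i)) \<and>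
           generate G (\<Union>i \<in> {1..n}. A i) = carrier G \<longrightarrow>
           hgamma \<gamma> G \<le> Max ((\<lambda>i. hgamma \<gamma> (G\<lparr>carrier := A i\<rparr>)) ` {1..n})
           \<and> (F5 \<gamma> \<longrightarrow> hgamma \<gamma> G = Max ((\<lambda>i. hgamma \<gamma> (G\<lparr>carrier := A i\<rparr>)) ` {1..n})))"
proof (intro conjI allI impI)
  note F = assms(1) and NT = assms(2) and F1 = assms(3) and F2 = assms(4)
  fix G :: "'a monoid" and A :: "nat \<Rightarrow> 'a set" and n :: nat
  {
    assume H: "group G \<and> finite (carrier G) \<and> 1 \<le> n \<and> internal_direct_product G {1..n} A"
    then have G: "group G" and fin: "finite (carrier G)" and n: "1 \<le> n"
      and idp: "internal_direct_product G {1..n} A" by auto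
    have ne: "{1..n} \<noteq> {}" using n by simp
    have sn: "\<forall>i \<in> {1..n}. subnormal G (A i)"
    proof
      fix i assume i: "i \<in> {1..n}"
      have "A i \<lhd> G" using idp i unfolding internal_direct_product_def by blast
      then have "A i \<lhd> G\<lparr>carrier := carrier G\<rparr>" by simp
      then show "subnormal G (A i)" using subnormal.step[OF subnormal.refl] by blast
    qed
    have gen: "generate G (\<Union>i \<in> {1..n}. A i) = carrier G" using idp unfolding internal_direct_product_def by blast
    have up: "hgamma \<gamma> G \<le> Max ((\<lambda>i. hgamma \<gamma> (G\<lparr>carrier := A i\<rparr>)) ` {1..n})"
      using upper_bound[OF F NT F1 F2 G fin _ ne sn gen] by simp
    have lo: "Max ((\<lambda>i. hgamma \<gamma> (G\<lparr>carrier := A i\<rparr>)) ` {1..n}) \<le> hgamma \<gamma> G"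
      using lower_bound_direct[OF F NT F1 G fin idp] ne by simp
    show "hgamma \<gamma> G = Max ((\<lambda>i. hgamma \<gamma> (G\<lparr>carrier := A i\<rparr>)) ` {1..n})" using up lo by simp
  }
  {
    assume H: "group G \<and> finite (carrier G) \<and> 1 \<le> n \<and> (\<forall>i \<in> {1..n}. subnormal G (A i)) \<and>
           generate G (\<Union>i \<in> {1..n}. A i) = carrier G"
    then have G: "group G" and fin: "finite (carrier G)" and n: "1 \<le> n"
      and sn: "\<forall>i \<in> {1..n}. subnormal G (A i)" and gen: "generate G (\<Union>i \<in> {1..n}. A i) = carrier G" by auto
    have ne: "{1..n} \<noteq> {}" using n by simp
    show up: "hgamma \<gamma> G \<le> Max ((\<lambda>i. hgamma \<gamma> (G\<lparr>carrier := A i\<rparr>)) ` {1..n})"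
      using upper_bound[OF F NT F1 F2 G fin _ ne sn gen] by simp
    assume F5: "F5 \<gamma>"
    have lo: "Max ((\<lambda>i. hgamma \<gamma> (G\<lparr>carrier := A i\<rparr>)) ` {1..n}) \<le> hgamma \<gamma> G"
      using lower_bound_F5[OF F NT F1 F2 F5 G fin] sn ne by simp
    show "hgamma \<gamma> G = Max ((\<lambda>i. hgamma \<gamma> (G\<lparr>carrier := A i\<rparr>)) ` {1..n})" using up lo by simp
  }
qed

end
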